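(* Let $X$ be a separable real normed vector space and let $g\in\Gamma(X)$ be sublinear. Then $w^{\ast}\text{-}\operatorname{qri}\partial g(0)\neq\emptyset$, and so there exists $x^{\ast}\in X^{\ast}$ such that the set $[g\le x^{\ast}]$ is a linear space.
   Context: $X^{\ast}$ is the topological dual of $X$, $\langle x,x^{\ast}\rangle:=x^{\ast}(x)$. $\Gamma(X)$ is the set of proper lower semicontinuous convex functions $X\to\mathbb{R}\cup\{\pm\infty\}$. $\partial g(0)=\{x^{\ast}\in X^{\ast}:\langle x',x^{\ast}\rangle\le g(x')\ \forall x'\in X\}$. $[g\le x^{\ast}]:=\{x\in X:g(x)\le\langle x,x^{\ast}\rangle\}$. For convex $B\subset X^{\ast}$, $w^{\ast}\text{-}\operatorname{qri}B=\{b\in B:\text{the weak}^{\ast}\text{ closure of }\mathbb{R}_+(B-b)\text{ is a linear subspace}\}$. *)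

theory Defs
  imports "HOL-Analysis.Analysis" "HOL-Library.Extended_Real"
begin

definition dual_space :: "('a::real_normed_vector \<Rightarrow> real) set" where
  "dual_space = {f. bounded_linear f}"

text \<open>Weak-star topology on the dual: topology of pointwise convergence,
  i.e. the subspace topology induced by the product topology on functions.\<close>
definition weak_star :: "('a::real_normed_vector \<Rightarrow> real) topology" where
  "weak_star = subtopology (product_topology (\<lambda>_. euclideanreal) UNIV) dual_space"

definition fun_subspace :: "('a \<Rightarrow> real) set \<Rightarrow> bool" where
  "fun_subspace S \<longleftrightarrow> (\<lambda>_. 0) \<in> S \<and> (\<forall>f\<in>S. \<forall>h\<in>S. (\<lambda>x. f x + h x) \<in> S)
     \<and> (\<forall>t::real. \<forall>f\<in>S. (\<lambda>x. t * f x) \<in> S)"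

definition wstar_qri :: "('a::real_normed_vector \<Rightarrow> real) set \<Rightarrow> ('a \<Rightarrow> real) set" where
  "wstar_qri B = {b \<in> B. fun_subspace
      (weak_star closure_of {(\<lambda>x. t * (c x - b x)) | t c. t \<ge> 0 \<and> c \<in> B})}"

definition subdiff0 :: "('a::real_normed_vector \<Rightarrow> ereal) \<Rightarrow> ('a \<Rightarrow> real) set" where
  "subdiff0 g = {xs \<in> dual_space. \<forall>x'. ereal (xs x') \<le> g x'}"

definition below_set :: "('a \<Rightarrow> ereal) \<Rightarrow> ('a \<Rightarrow> real) \<Rightarrow> 'a set" where
  "below_set g xs = {x. g x \<le> ereal (xs x)}"

definition proper_fun :: "('a \<Rightarrow> ereal) \<Rightarrow> bool" where
  "proper_fun g \<longleftrightarrow> (\<forall>x. g x \<noteq> -\<infinity>) \<and> (\<exists>x. g x \<noteq> \<infinity>)"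

definition lsc_fun :: "('a::topological_space \<Rightarrow> ereal) \<Rightarrow> bool" where
  "lsc_fun g \<longleftrightarrow> (\<forall>c. closed {x. g x \<le> c})"

definition convex_efun :: "('a::real_vector \<Rightarrow> ereal) \<Rightarrow> bool" where
  "convex_efun g \<longleftrightarrow> (\<forall>x y. \<forall>t::real. 0 \<le> t \<and> t \<le> 1 \<longrightarrow>
      g (t *\<^sub>R x + (1 - t) *\<^sub>R y) \<le> ereal t * g x + ereal (1 - t) * g y)"

definition sublinear_efun :: "('a::real_vector \<Rightarrow> ereal) \<Rightarrow> bool" where
  "sublinear_efun g \<longleftrightarrow> (\<forall>x y. g (x + y) \<le> g x + g y)
      \<and> (\<forall>x. \<forall>t::real. t > 0 \<longrightarrow> g (t *\<^sub>R x) = ereal t * g x)"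

definition separable_normed :: "'a::metric_space itself \<Rightarrow> bool" where
  "separable_normed _ \<longleftrightarrow> (\<exists>D::'a set. countable D \<and> closure D = UNIV)"

end

theory Submission
  imports Defs
begin


definition sublin :: "('a::real_vector \<Rightarrow> real) \<Rightarrow> bool" where
  "sublin q \<longleftrightarrow> (\<forall>x y. q (x + y) \<le> q x + q y) \<and> (\<forall>t>0. \<forall>x. q (t *\<^sub>R x) = t * q x)"

lemma sublin_homI:
  fixes q :: "'a::real_vector \<Rightarrow> real"
  assumes "\<And>t x. t > 0 \<Longrightarrow> q (t *\<^sub>R x) \<le> t * q x"
  shows "\<And>t x. t > 0 \<Longrightarrow> q (t *\<^sub>R x) = t * q x"
proof -
  fix t :: real and x assume t: "t > 0"
  have "q x = q (inverse t *\<^sub>R (t *\<^sub>R x))" using t by simp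
  also have "\<dots> \<le> inverse t * q (t *\<^sub>R x)" using assms[of "inverse t" "t *\<^sub>R x"] t by simp
  finally have "t * q x \<le> q (t *\<^sub>R x)" using t by (simp add: field_simps)
  with assms[OF t, of x] show "q (t *\<^sub>R x) = t * q x" by linarith
qed

lemma sublin_add: "sublin q \<Longrightarrow> q (x + y) \<le> q x + q y"
  by (simp add: sublin_def)

lemma sublin_0: assumes "sublin q" shows "q 0 = 0"
proof -
  have "q ((2::real) *\<^sub>R 0) = 2 * q 0" using assms unfolding sublin_def by (meson zero_less_numeral)
  then show ?thesis by simp
qed

lemma sublin_hom: assumes "sublin q" "t \<ge> 0" shows "q (t *\<^sub>R x) = t * q x"
  using assms sublin_0[OF assms(1)] by (cases "t = 0") (auto simp: sublin_def)

lemma sublin_neg: assumes "sublin q" shows "0 \<le> q x + q (-x)"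
  using sublin_add[OF assms, of x "-x"] sublin_0[OF assms] by simp

lemma inf_add_helper:
  fixes A B :: "real set"
  assumes "A \<noteq> {}" "B \<noteq> {}" "\<And>a b. a \<in> A \<Longrightarrow> b \<in> B \<Longrightarrow> c \<le> a + b"
  shows "c \<le> Inf A + Inf B"
proof -
  have "c - b \<le> Inf A" if "b \<in> B" for b
    by (rule cInf_greatest[OF assms(1)]) (use assms(3) that in force)
  then have "c - Inf A \<le> Inf B"
    by (intro cInf_greatest[OF assms(2)]) force
  then show ?thesis by simp
qed

lemma sublin_shift:
  fixes q :: "'a::real_vector \<Rightarrow> real" and y :: 'a
  assumes q: "sublin q"
  defines "r \<equiv> \<lambda>x. Inf {q (x + t *\<^sub>R y) - t * q y | t. t \<ge> 0}"
  shows "sublin r" "\<And>x. r x \<le> q x" "r (-y) \<le> - q y"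
proof -
  let ?S = "\<lambda>x. {q (x + t *\<^sub>R y) - t * q y | t. t \<ge> 0}"
  have ne: "?S x \<noteq> {}" for x by auto
  have lb: "- q (-x) \<le> q (x + t *\<^sub>R y) - t * q y" if "t \<ge> 0" for x t
  proof -
    have "q (t *\<^sub>R y) \<le> q (x + t *\<^sub>R y) + q (-x)"
      using sublin_add[OF q, of "x + t *\<^sub>R y" "-x"] by simp
    then show ?thesis using sublin_hom[OF q that] by simp
  qed
  have bdd: "bdd_below (?S x)" for x
    unfolding bdd_below_def using lb by blast
  have low: "r x \<le> q (x + t *\<^sub>R y) - t * q y" if "t \<ge> 0" for x t
    unfolding r_def by (rule cInf_lower[OF _ bdd]) (use that in blast)
  show rq: "r x \<le> q x" for x using low[of 0 x] by simp
  show "r (-y) \<le> - q y" using low[of 1 "-y"] sublin_0[OF q] by simp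
  have sa: "r (x1 + x2) \<le> r x1 + r x2" for x1 x2
    unfolding r_def
  proof (rule inf_add_helper[OF ne ne])
    fix a b assume "a \<in> ?S x1" "b \<in> ?S x2"
    then obtain t1 t2 where t: "t1 \<ge> 0" "t2 \<ge> 0" and a: "a = q (x1 + t1 *\<^sub>R y) - t1 * q y"
      and b: "b = q (x2 + t2 *\<^sub>R y) - t2 * q y" by blast
    have "Inf (?S (x1 + x2)) \<le> q (x1 + x2 + (t1 + t2) *\<^sub>R y) - (t1 + t2) * q y"
      using low[of "t1 + t2" "x1 + x2"] t unfolding r_def by simp
    also have "x1 + x2 + (t1 + t2) *\<^sub>R y = (x1 + t1 *\<^sub>R y) + (x2 + t2 *\<^sub>R y)"
      by (simp add: algebra_simps)
    also have "q \<dots> \<le> q (x1 + t1 *\<^sub>R y) + q (x2 + t2 *\<^sub>R y)" by (rule sublin_add[OF q])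
    finally show "Inf (?S (x1 + x2)) \<le> a + b" unfolding a b by (simp add: algebra_simps)
  qed
  have hm: "r (s *\<^sub>R x) \<le> s * r x" if s: "s > 0" for s x
  proof -
    have rx: "r x = Inf (?S x)" by (simp add: r_def)
    have "r (s *\<^sub>R x) / s \<le> r x" unfolding rx
    proof (rule cInf_greatest[OF ne])
      fix a assume "a \<in> ?S x"
      then obtain t where t: "t \<ge> 0" and a: "a = q (x + t *\<^sub>R y) - t * q y" by blast
      have "r (s *\<^sub>R x) \<le> q (s *\<^sub>R x + (s * t) *\<^sub>R y) - (s * t) * q y"
        using low[of "s * t" "s *\<^sub>R x"] t s by simp
      also have "s *\<^sub>R x + (s * t) *\<^sub>R y = s *\<^sub>R (x + t *\<^sub>R y)" by (simp add: algebra_simps)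
      also have "q \<dots> = s * q (x + t *\<^sub>R y)" using sublin_hom[OF q] s by simp
      finally have "r (s *\<^sub>R x) \<le> s * a" unfolding a by (simp add: algebra_simps)
      then show "r (s *\<^sub>R x) / s \<le> a" using s by (simp add: field_simps)
    qed
    then show ?thesis using s by (simp add: field_simps)
  qed
  show "sublin r" unfolding sublin_def using sa sublin_homI[of r, OF hm] by blast
qed

definition sepi :: "('a \<Rightarrow> real) \<Rightarrow> ('a \<times> real) set" where
  "sepi q = {(x, c). q x < c}"

lemma sepi_le: assumes "sepi q1 \<subseteq> sepi q2" shows "q2 x \<le> q1 x"
proof (rule ccontr)
  assume "\<not> q2 x \<le> q1 x"
  then have "(x, (q1 x + q2 x) / 2) \<in> sepi q1" "(x, (q1 x + q2 x) / 2) \<notin> sepi q2"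
    by (auto simp: sepi_def)
  with assms show False by blast
qed

lemma sepi_mono: "(\<And>x. q2 x \<le> q1 x) \<Longrightarrow> sepi q1 \<subseteq> sepi q2"
  unfolding sepi_def by (auto intro: order.strict_trans1)

lemma sepi_inj: "sepi q1 = sepi q2 \<Longrightarrow> q1 = q2"
  by (rule ext) (simp add: antisym sepi_le)

lemma sublin_linear_below:
  fixes p :: "'a::real_vector \<Rightarrow> real"
  assumes p: "sublin p"
  shows "\<exists>f. linear f \<and> (\<forall>x. f x \<le> p x)"
proof -
  define A where "A = {sepi q | q. sublin q \<and> (\<forall>x. q x \<le> p x)}"
  have "\<exists>U\<in>A. \<forall>X\<in>C. X \<subseteq> U" if C: "C \<in> chains A" for C
  proof (cases "C = {}")
    case True
    then show ?thesis using p unfolding A_def by auto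
  next
    case False
    define Q where "Q = {q. sublin q \<and> (\<forall>x. q x \<le> p x) \<and> sepi q \<in> C}"
    have CA: "C \<subseteq> A" using C by (simp add: chains_def)
    have CQ: "\<exists>q\<in>Q. X = sepi q" if "X \<in> C" for X
      using that CA unfolding A_def Q_def by blast
    have chain: "(\<forall>x. q2 x \<le> q1 x) \<or> (\<forall>x. q1 x \<le> q2 x)" if "q1 \<in> Q" "q2 \<in> Q" for q1 q2
    proof -
      have "sepi q1 \<subseteq> sepi q2 \<or> sepi q2 \<subseteq> sepi q1"
        using C that unfolding chains_def chain_subset_def Q_def by blast
      then show ?thesis
      proof
        assume "sepi q1 \<subseteq> sepi q2" then show ?thesis using sepi_le[of q1 q2] by blast
      next
        assume "sepi q2 \<subseteq> sepi q1" then show ?thesis using sepi_le[of q2 q1] by blast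
      qed
    qed
    have Qne: "Q \<noteq> {}" using False CQ by blast
    define qq where "qq = (\<lambda>x. Inf ((\<lambda>q. q x) ` Q))"
    have lbq: "- p (-x) \<le> q x" if "q \<in> Q" for q x
    proof -
      have "0 \<le> q x + q (-x)" using sublin_neg that unfolding Q_def by blast
      moreover have "q (-x) \<le> p (-x)" using that unfolding Q_def by blast
      ultimately show ?thesis by linarith
    qed
    have bdd: "bdd_below ((\<lambda>q. q x) ` Q)" for x
      unfolding bdd_below_def using lbq by blast
    have low: "qq x \<le> q x" if "q \<in> Q" for q x
      unfolding qq_def by (rule cInf_lower[OF _ bdd]) (use that in blast)
    have ne: "(\<lambda>q. q x) ` Q \<noteq> {}" for x using Qne by blast
    have sa: "qq (x + y) \<le> qq x + qq y" for x y
      unfolding qq_def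
    proof (rule inf_add_helper[OF ne ne])
      fix a b assume "a \<in> (\<lambda>q. q x) ` Q" "b \<in> (\<lambda>q. q y) ` Q"
      then obtain q1 q2 where q: "q1 \<in> Q" "q2 \<in> Q" "a = q1 x" "b = q2 y" by blast
      show "Inf ((\<lambda>q. q (x + y)) ` Q) \<le> a + b"
        using chain[OF q(1,2)]
      proof
        assume le: "\<forall>x. q2 x \<le> q1 x"
        have "qq (x + y) \<le> q2 (x + y)" by (rule low[OF q(2)])
        also have "\<dots> \<le> q2 x + q2 y" using q(2) unfolding Q_def by (blast intro: sublin_add)
        also have "\<dots> \<le> a + b" using le q by auto
        finally show ?thesis unfolding qq_def .
      next
        assume le: "\<forall>x. q1 x \<le> q2 x"
        have "qq (x + y) \<le> q1 (x + y)" by (rule low[OF q(1)])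
        also have "\<dots> \<le> q1 x + q1 y" using q(1) unfolding Q_def by (blast intro: sublin_add)
        also have "\<dots> \<le> a + b" using le q by auto
        finally show ?thesis unfolding qq_def .
      qed
    qed
    have hm: "qq (s *\<^sub>R x) \<le> s * qq x" if s: "s > 0" for s x
    proof -
      have "qq (s *\<^sub>R x) / s \<le> qq x" unfolding qq_def[of] 
      proof (rule cInf_greatest[OF ne])
        fix a assume "a \<in> (\<lambda>q. q x) ` Q"
        then obtain q where q: "q \<in> Q" "a = q x" by blast
        have "qq (s *\<^sub>R x) \<le> q (s *\<^sub>R x)" by (rule low[OF q(1)])
        also have "\<dots> = s * a" using q s unfolding Q_def sublin_def by auto
        finally show "Inf ((\<lambda>q. q (s *\<^sub>R x)) ` Q) / s \<le> a" using s
          unfolding qq_def by (simp add: field_simps)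
      qed
      then show ?thesis using s by (simp add: field_simps)
    qed
    have "sublin qq" unfolding sublin_def using sa sublin_homI[of qq, OF hm] by blast
    moreover have "qq x \<le> p x" for x
    proof -
      obtain q where "q \<in> Q" using Qne by blast
      then have "qq x \<le> q x" "q x \<le> p x" using low[of q x] unfolding Q_def by auto
      then show ?thesis by linarith
    qed
    ultimately have "sepi qq \<in> A" unfolding A_def by blast
    moreover have "X \<subseteq> sepi qq" if XC: "X \<in> C" for X
    proof -
      obtain q where "q \<in> Q" "X = sepi q" using CQ[OF XC] by blast
      then show ?thesis using sepi_mono[of qq q] low by blast
    qed
    ultimately show ?thesis by blast
  qed
  then obtain M where M: "M \<in> A" and max: "\<forall>X\<in>A. M \<subseteq> X \<longrightarrow> X = M"
    using Zorn_Lemma2[of A] by blast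
  then obtain q where q: "sublin q" "\<forall>x. q x \<le> p x" and Mq: "M = sepi q"
    unfolding A_def by blast
  have negq: "q (-y) = - q y" for y
  proof -
    define r where "r = (\<lambda>x. Inf {q (x + t *\<^sub>R y) - t * q y | t. t \<ge> 0})"
    have r: "sublin r" "\<And>x. r x \<le> q x" "r (-y) \<le> - q y"
      unfolding r_def by (rule sublin_shift[OF q(1)])+
    have "r x \<le> p x" for x using r(2)[of x] spec[OF q(2), of x] by linarith
    then have "sepi r \<in> A" unfolding A_def using r(1) by blast
    moreover have "M \<subseteq> sepi r" unfolding Mq by (rule sepi_mono) (rule r(2))
    ultimately have "sepi r = sepi q" using max Mq by blast
    then have "r = q" by (rule sepi_inj)
    then show ?thesis using r(3) sublin_neg[OF q(1), of y] by simp
  qed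
  have "linear q"
  proof (rule linearI)
    fix x y
    have "q x = q ((x + y) + (-y))" by simp
    also have "\<dots> \<le> q (x + y) + q (-y)" by (rule sublin_add[OF q(1)])
    finally show "q (x + y) = q x + q y" using sublin_add[OF q(1), of x y] negq[of y] by simp
  next
    fix c :: real and x
    show "q (c *\<^sub>R x) = c *\<^sub>R q x"
    proof (cases "c \<ge> 0")
      case True then show ?thesis using sublin_hom[OF q(1)] by simp
    next
      case False
      have "q (c *\<^sub>R x) = q ((-c) *\<^sub>R (-x))" by simp
      also have "\<dots> = (-c) * q (-x)" using False by (intro sublin_hom[OF q(1)]) simp
      finally show ?thesis using negq[of x] by simp
    qed
  qed
  then show ?thesis using q(2) by blast
qed

lemma sublin_HB:
  fixes p :: "'a::real_vector \<Rightarrow> real"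
  assumes p: "sublin p"
  shows "\<exists>f. linear f \<and> (\<forall>x. f x \<le> p x) \<and> f x0 = p x0"
proof -
  define r where "r = (\<lambda>x. Inf {p (x + t *\<^sub>R x0) - t * p x0 | t. t \<ge> 0})"
  have r: "sublin r" "\<And>x. r x \<le> p x" "r (-x0) \<le> - p x0"
    unfolding r_def by (rule sublin_shift[OF p])+
  obtain f where f: "linear f" "\<forall>x. f x \<le> r x" using sublin_linear_below[OF r(1)] by blast
  have "f (-x0) = - f x0" using f(1) by (simp add: linear_neg)
  moreover have "f (-x0) \<le> r (-x0)" using f(2) by blast
  ultimately have "p x0 \<le> f x0" using r(3) by linarith
  moreover have "f x0 \<le> p x0" using spec[OF f(2), of x0] r(2)[of x0] by linarith
  ultimately have "f x0 = p x0" by simp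
  moreover have "f x \<le> p x" for x using spec[OF f(2), of x] r(2)[of x] by linarith
  ultimately show ?thesis using f(1) by blast
qed



locale sg =
  fixes g :: "'a::real_normed_vector \<Rightarrow> ereal"
  assumes proper: "proper_fun g" and lsc: "lsc_fun g" and subl: "sublinear_efun g"
begin

lemma g_add: "g (x + y) \<le> g x + g y"
  using subl by (simp add: sublinear_efun_def)

lemma g_hom: "t > 0 \<Longrightarrow> g (t *\<^sub>R x) = ereal t * g x"
  using subl by (simp add: sublinear_efun_def)

lemma g_nminf: "g x \<noteq> -\<infinity>"
  using proper by (simp add: proper_fun_def)

lemma g_closed: "closed {x. g x \<le> c}"
  using lsc by (simp add: lsc_fun_def)

lemma g0: "g 0 = 0"
proof -
  obtain x where "g x \<noteq> \<infinity>" using proper by (auto simp: proper_fun_def)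
  then obtain a where a: "g x = ereal a" using g_nminf[of x] by (cases "g x") auto
  have le: "g 0 \<le> ereal \<epsilon>" if eps: "\<epsilon> > 0" for \<epsilon>
  proof -
    have "0 \<in> {y. g y \<le> ereal \<epsilon>}"
    proof (rule closed_approachable[OF g_closed, THEN iffD1], intro allI impI)
      fix e :: real assume e: "e > 0"
      define t where "t = min (e / (2 * (norm x + 1))) (\<epsilon> / (\<bar>a\<bar> + 1))"
      have "0 < e / (2 * (norm x + 1))" using e by (intro divide_pos_pos) (auto intro: add_nonneg_pos)
      then have t: "t > 0" using e eps by (simp add: t_def)
      have "t * a \<le> t * \<bar>a\<bar>" using t by (simp add: mult_left_mono)
      also have "\<dots> \<le> (\<epsilon> / (\<bar>a\<bar> + 1)) * \<bar>a\<bar>" by (rule mult_right_mono) (auto simp: t_def)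
      also have "\<dots> \<le> \<epsilon>" using eps by (simp add: field_simps)
      finally have "g (t *\<^sub>R x) \<le> ereal \<epsilon>" using g_hom[OF t, of x] a by simp
      moreover have "dist (t *\<^sub>R x) 0 < e"
      proof -
        have "dist (t *\<^sub>R x) 0 = t * norm x" using t by simp
        also have "\<dots> \<le> (e / (2 * (norm x + 1))) * norm x"
          by (rule mult_right_mono) (auto simp: t_def)
        also have "\<dots> = e * (norm x / (2 * (norm x + 1)))" by simp
        also have "\<dots> < e * 1"
        proof (rule mult_strict_left_mono[OF _ e])
          have "norm x < 2 * (norm x + 1)" by (smt (verit) norm_ge_zero)
          then show "norm x / (2 * (norm x + 1)) < 1"
            by (subst pos_divide_less_eq) (auto intro: add_nonneg_pos)
        qed
        finally show ?thesis by simp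
      qed
      ultimately show "\<exists>y\<in>{y. g y \<le> ereal \<epsilon>}. dist y 0 < e" by blast
    qed
    then show ?thesis by simp
  qed
  have "g 0 \<le> 0"
  proof (rule ereal_le_epsilon2)
    fix e :: real assume "e > 0" then show "g 0 \<le> 0 + ereal e" using le by simp
  qed
  moreover have "g 0 = ereal 2 * g 0" using g_hom[of 2 0] by simp
  ultimately show ?thesis using g_nminf[of 0] by (cases "g 0") auto
qed

lemma g_lower: obtains k0 :: real where "k0 > 0" "\<And>y. ereal (- k0 * norm y) \<le> g y"
proof -
  have "0 \<notin> {y. g y \<le> ereal (-1)}" using g0 by simp
  then have "\<not> (\<forall>e>0. \<exists>y\<in>{y. g y \<le> ereal (-1)}. dist y 0 < e)"
    using closed_approachable[OF g_closed[of "ereal (-1)"], of 0] by blast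
  then obtain \<delta> where d: "\<delta> > 0" "\<And>y. dist y 0 < \<delta> \<Longrightarrow> \<not> g y \<le> ereal (-1)"
    by auto
  have "ereal (- (2 / \<delta>) * norm y) \<le> g y" for y
  proof (cases "y = 0")
    case True then show ?thesis using g0 by simp
  next
    case False
    define s where "s = \<delta> / (2 * norm y)"
    have s: "s > 0" using False d by (simp add: s_def)
    have "dist (s *\<^sub>R y) 0 < \<delta>" using False d by (simp add: s_def)
    then have "ereal (-1) < g (s *\<^sub>R y)" using d(2)[of "s *\<^sub>R y"] by (simp add: not_le)
    then have "ereal (-1) < ereal s * g y" using g_hom[OF s, of y] by simp
    then show ?thesis
    proof (cases "g y")
      case (real b)
      with \<open>ereal (-1) < ereal s * g y\<close> have "-1 < s * b" by simp
      then have "- 1 / s < b" using s by (simp add: field_simps)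
      moreover have "- 1 / s = - (2 / \<delta>) * norm y" using False d by (simp add: s_def field_simps)
      ultimately show ?thesis using real by simp
    qed (use g_nminf in auto)
  qed
  then show ?thesis using that[of "2 / \<delta>"] d by simp
qed

end


context sg begin

definition G :: "'a \<Rightarrow> real" where "G x = real_of_ereal (g x)"

lemma fin: "g y \<noteq> \<infinity> \<Longrightarrow> g y = ereal (G y)"
  using g_nminf[of y] by (cases "g y") (auto simp: G_def)

definition pk :: "real \<Rightarrow> 'a \<Rightarrow> real" where
  "pk k x = Inf {G y + k * norm (x - y) | y. g y \<noteq> \<infinity>}"

context
  fixes k0 k :: real
  assumes k0: "k0 > 0" and lb: "\<And>y. ereal (- k0 * norm y) \<le> g y" and kk: "k0 \<le> k"
begin

lemma Glb: "g y \<noteq> \<infinity> \<Longrightarrow> - k0 * norm y \<le> G y"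
  using lb[of y] fin[of y] by simp

lemma pk_elem_lb:
  assumes "g y \<noteq> \<infinity>" shows "- k0 * norm x \<le> G y + k * norm (x - y)"
proof -
  have "norm y \<le> norm x + norm (y - x)" using norm_triangle_ineq[of x "y - x"] by simp
  then have "norm y \<le> norm x + norm (x - y)" by (simp add: norm_minus_commute)
  then have "k0 * norm y \<le> k0 * (norm x + norm (x - y))" using k0 by (intro mult_left_mono) auto
  then have "k0 * norm y \<le> k0 * norm x + k0 * norm (x - y)" by (simp add: distrib_left)
  moreover have "k0 * norm (x - y) \<le> k * norm (x - y)" using kk by (simp add: mult_right_mono)
  ultimately show ?thesis using Glb[OF assms] by linarith
qed

lemma pk_ne: "{G y + k * norm (x - y) | y. g y \<noteq> \<infinity>} \<noteq> {}"
proof -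
  have "G 0 + k * norm (x - 0) \<in> {G y + k * norm (x - y) | y. g y \<noteq> \<infinity>}"
    by (rule CollectI, rule exI[of _ 0]) (simp add: g0)
  then show ?thesis by blast
qed

lemma pk_bdd: "bdd_below {G y + k * norm (x - y) | y. g y \<noteq> \<infinity>}"
  unfolding bdd_below_def using pk_elem_lb by blast

lemma pk_low: "g y \<noteq> \<infinity> \<Longrightarrow> pk k x \<le> G y + k * norm (x - y)"
  unfolding pk_def by (rule cInf_lower[OF _ pk_bdd]) blast

lemma G0: "G 0 = 0" using g0 by (simp add: G_def)

lemma pk_le_norm: "pk k x \<le> k * norm x"
  using pk_low[of 0 x] g0 G0 by simp

lemma pk_le_g: "ereal (pk k x) \<le> g x"
proof (cases "g x = \<infinity>")
  case False
  then show ?thesis using pk_low[of x x] fin[of x] by simp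
qed simp

lemma pk_sublin: "sublin (pk k)"
proof -
  have sa: "pk k (x1 + x2) \<le> pk k x1 + pk k x2" for x1 x2
    unfolding pk_def[of k x1] pk_def[of k x2]
  proof (rule inf_add_helper[OF pk_ne pk_ne])
    fix a b assume "a \<in> {G y + k * norm (x1 - y) | y. g y \<noteq> \<infinity>}" "b \<in> {G y + k * norm (x2 - y) | y. g y \<noteq> \<infinity>}"
    then obtain y1 y2 where y: "g y1 \<noteq> \<infinity>" "g y2 \<noteq> \<infinity>" and a: "a = G y1 + k * norm (x1 - y1)"
      and b: "b = G y2 + k * norm (x2 - y2)" by blast
    have "g (y1 + y2) \<le> ereal (G y1 + G y2)" using g_add[of y1 y2] fin[OF y(1)] fin[OF y(2)] by simp
    then have f12: "g (y1 + y2) \<noteq> \<infinity>" by auto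
    have "ereal (G (y1 + y2)) \<le> ereal (G y1 + G y2)" using fin[OF f12] \<open>g (y1 + y2) \<le> _\<close> by simp
    then have G12: "G (y1 + y2) \<le> G y1 + G y2" by simp
    have "pk k (x1 + x2) \<le> G (y1 + y2) + k * norm ((x1 + x2) - (y1 + y2))" by (rule pk_low[OF f12])
    also have "norm ((x1 + x2) - (y1 + y2)) \<le> norm (x1 - y1) + norm (x2 - y2)"
      using norm_triangle_ineq[of "x1 - y1" "x2 - y2"] by (simp add: algebra_simps)
    then have "k * norm ((x1 + x2) - (y1 + y2)) \<le> k * (norm (x1 - y1) + norm (x2 - y2))"
      using k0 kk by (intro mult_left_mono) auto
    then have "k * norm ((x1 + x2) - (y1 + y2)) \<le> k * norm (x1 - y1) + k * norm (x2 - y2)"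
      by (simp add: distrib_left)
    then have "G (y1 + y2) + k * norm ((x1 + x2) - (y1 + y2)) \<le> a + b" using G12 a b by linarith
    finally show "pk k (x1 + x2) \<le> a + b" .
  qed
  have hm: "pk k (s *\<^sub>R x) \<le> s * pk k x" if s: "s > 0" for s x
  proof -
    have "pk k (s *\<^sub>R x) / s \<le> pk k x" unfolding pk_def[of k x]
    proof (rule cInf_greatest[OF pk_ne])
      fix a assume "a \<in> {G y + k * norm (x - y) | y. g y \<noteq> \<infinity>}"
      then obtain y where y: "g y \<noteq> \<infinity>" and a: "a = G y + k * norm (x - y)" by blast
      have gs: "g (s *\<^sub>R y) = ereal (s * G y)" using g_hom[OF s, of y] fin[OF y] by simp
      then have "pk k (s *\<^sub>R x) \<le> G (s *\<^sub>R y) + k * norm (s *\<^sub>R x - s *\<^sub>R y)"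
        by (intro pk_low) simp
      also have "s *\<^sub>R x - s *\<^sub>R y = s *\<^sub>R (x - y)" by (simp add: scaleR_diff_right)
      also have "G (s *\<^sub>R y) + k * norm (s *\<^sub>R (x - y)) = s * a"
      proof -
        have "norm (s *\<^sub>R (x - y)) = s * norm (x - y)" using s by simp
        then show ?thesis using gs s unfolding a G_def by (simp add: distrib_left)
      qed
      finally show "pk k (s *\<^sub>R x) / s \<le> a" using s by (simp add: field_simps)
    qed
    then show ?thesis using s by (simp add: field_simps)
  qed
  show ?thesis unfolding sublin_def using sa sublin_homI[of "pk k", OF hm] by blast
qed

end

lemma pk_approx:
  assumes k0: "k0 > 0" and lb: "\<And>y. ereal (- k0 * norm y) \<le> g y" and r: "ereal r < g x0"
  shows "\<exists>k\<ge>k0. r < pk k x0"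
proof (rule ccontr)
  assume "\<not> ?thesis"
  then have small: "pk k x0 \<le> r" if "k \<ge> k0" for k using that by (simp add: not_less)
  obtain r' where r': "r < r'" "ereal r' < g x0" using ereal_dense2[OF r] by auto
  define M where "M = r' + k0 * norm x0"
  have "x0 \<in> {y. g y \<le> ereal r'}"
  proof (rule closed_approachable[OF g_closed, THEN iffD1], intro allI impI)
    fix e :: real assume e: "e > 0"
    define k where "k = k0 + (\<bar>M\<bar> + 1) / e"
    have kk: "k0 \<le> k" using e by (simp add: k_def)
    have "Inf {G y + k * norm (x0 - y) | y. g y \<noteq> \<infinity>} < r'"
      using small[OF kk] r'(1) unfolding pk_def by simp
    then obtain y where y: "g y \<noteq> \<infinity>" and lt: "G y + k * norm (x0 - y) < r'"
      using cInf_less_iff[OF pk_ne[OF k0 lb kk] pk_bdd[OF k0 lb kk]] by blast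
    have "0 \<le> k * norm (x0 - y)" using kk k0 by simp
    then have "g y \<le> ereal r'" using lt fin[OF y] by simp
    moreover have "dist y x0 < e"
    proof -
      have "norm y \<le> norm x0 + norm (y - x0)" using norm_triangle_ineq[of x0 "y - x0"] by simp
      then have "norm y \<le> norm x0 + norm (x0 - y)" by (simp add: norm_minus_commute)
      then have "k0 * norm y \<le> k0 * (norm x0 + norm (x0 - y))" using k0 by (intro mult_left_mono) auto
      then have "k0 * norm y \<le> k0 * norm x0 + k0 * norm (x0 - y)" by (simp add: distrib_left)
      then have "k * norm (x0 - y) - k0 * norm (x0 - y) < M"
        using lt Glb[OF k0 lb kk y] unfolding M_def by linarith
      then have "(\<bar>M\<bar> + 1) / e * norm (x0 - y) < \<bar>M\<bar> + 1"
        unfolding k_def by (simp add: algebra_simps)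
      then have "norm (x0 - y) * (\<bar>M\<bar> + 1) < e * (\<bar>M\<bar> + 1)" using e
        by (simp add: field_simps)
      then have "norm (x0 - y) < e" by (rule mult_right_less_imp_less) simp
      then show ?thesis by (simp add: dist_norm norm_minus_commute)
    qed
    ultimately show "\<exists>y\<in>{y. g y \<le> ereal r'}. dist y x0 < e" by blast
  qed
  then show False using r'(2) by simp
qed

lemma HB_g:
  assumes r: "ereal r < g x0"
  shows "\<exists>f\<in>subdiff0 g. r < f x0"
proof -
  obtain k0 where k0: "k0 > 0" "\<And>y. ereal (- k0 * norm y) \<le> g y" using g_lower by blast
  obtain k where kk: "k0 \<le> k" and rk: "r < pk k x0" using pk_approx[OF k0 r] by blast
  obtain f where f: "linear f" "\<forall>x. f x \<le> pk k x" "f x0 = pk k x0"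
    using sublin_HB[OF pk_sublin[OF k0 kk]] by blast
  have bl: "bounded_linear f"
  proof (rule bounded_linear_intro[where K = k])
    show "f (x + y) = f x + f y" for x y by (rule linear_add[OF f(1)])
    show "f (c *\<^sub>R x) = c *\<^sub>R f x" for c x by (rule linear_scale[OF f(1)])
    show "norm (f x) \<le> norm x * k" for x
    proof -
      have "f x \<le> k * norm x" using spec[OF f(2), of x] pk_le_norm[OF k0 kk, of x] by linarith
      moreover have "- f x \<le> k * norm x" using spec[OF f(2), of "-x"] pk_le_norm[OF k0 kk, of "-x"]
        linear_neg[OF f(1), of x] by simp
      ultimately show ?thesis by (simp add: mult.commute)
    qed
  qed
  have "ereal (f x) \<le> g x" for x
  proof -
    have "ereal (f x) \<le> ereal (pk k x)" using spec[OF f(2), of x] by simp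
    then show ?thesis using pk_le_g[OF k0 kk, of x] by (rule order_trans)
  qed
  then have "f \<in> subdiff0 g" using bl by (simp add: subdiff0_def dual_space_def)
  moreover have "r < f x0" using rk f(3) by simp
  ultimately show ?thesis by blast
qed

lemma B_ne: "subdiff0 g \<noteq> {}"
  using HB_g[of "-1" 0] g0 by auto

end


context sg begin

lemma B_bl: "c \<in> subdiff0 g \<Longrightarrow> bounded_linear c"
  by (simp add: subdiff0_def dual_space_def)

lemma B_le: "c \<in> subdiff0 g \<Longrightarrow> ereal (c x) \<le> g x"
  by (simp add: subdiff0_def)

lemma B_leG: "c \<in> subdiff0 g \<Longrightarrow> g x \<noteq> \<infinity> \<Longrightarrow> c x \<le> G x"
  using B_le[of c x] fin[of x] by simp

lemma B_intro: "bounded_linear c \<Longrightarrow> (\<And>x. g x \<noteq> \<infinity> \<Longrightarrow> c x \<le> G x) \<Longrightarrow> c \<in> subdiff0 g"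
  unfolding subdiff0_def dual_space_def
proof (clarsimp)
  fix x assume "\<And>x. g x \<noteq> \<infinity> \<Longrightarrow> c x \<le> G x"
  then show "ereal (c x) \<le> g x" using fin[of x] by (cases "g x = \<infinity>") auto
qed

lemma series:
  fixes f :: "nat \<Rightarrow> 'a \<Rightarrow> real"
  assumes fB: "\<And>n. f n \<in> subdiff0 g"
  obtains xs lam where "xs \<in> subdiff0 g" "\<And>n. lam n > 0"
    "\<And>x n. g x \<noteq> \<infinity> \<Longrightarrow> xs x \<le> G x - lam n * (G x - f n x)"
    "\<And>n. (\<lambda>x. xs x + lam n * (xs x - f n x)) \<in> subdiff0 g"
proof -
  have bl: "bounded_linear (f n)" for n using B_bl[OF fB] .
  define w where "w n = (1/2)^n / (1 + onorm (f n))" for n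
  have on: "0 \<le> onorm (f n)" for n using onorm_pos_le[OF bl] .
  have wpos: "w n > 0" for n unfolding w_def using on[of n] by (intro divide_pos_pos) auto
  have wle: "w n \<le> (1/2)^n" for n
  proof -
    have "(1/2::real)^n / (1 + onorm (f n)) \<le> (1/2)^n / 1"
      using on[of n] by (intro divide_left_mono) auto
    then show ?thesis unfolding w_def by simp
  qed
  have sg2: "summable (\<lambda>n. (1/2::real)^n)" by (rule summable_geometric) simp
  have sw: "summable w"
    by (rule summable_comparison_test'[OF sg2, where N=0]) (use wpos wle in \<open>auto simp: less_imp_le\<close>)
  define W where "W = suminf w"
  have W: "W > 0" unfolding W_def by (rule suminf_pos[OF sw wpos])
  have fb: "\<bar>w n * f n x\<bar> \<le> (1/2)^n * norm x" for n x
  proof -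
    have "\<bar>f n x\<bar> \<le> onorm (f n) * norm x" using onorm[OF bl] by simp
    then have "\<bar>w n * f n x\<bar> \<le> w n * (onorm (f n) * norm x)"
      using wpos[of n] by (simp add: abs_mult mult_left_mono)
    also have "\<dots> = (1/2)^n * (onorm (f n) / (1 + onorm (f n))) * norm x"
      unfolding w_def by simp
    also have "\<dots> \<le> (1/2)^n * 1 * norm x"
      using on[of n] by (intro mult_right_mono mult_left_mono) auto
    finally show ?thesis by simp
  qed
  have swf: "summable (\<lambda>n. w n * f n x)" for x
    by (rule summable_comparison_test'[OF summable_mult2[OF sg2], where N=0]) (use fb in auto)
  define xs where "xs x = (\<Sum>n. w n * f n x) / W" for x
  define lam where "lam n = w n / W" for n
  have lampos: "lam n > 0" for n unfolding lam_def using wpos W by simp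
  have K1: "xs x \<le> G x - lam n * (G x - f n x)" if fx: "g x \<noteq> \<infinity>" for x n
  proof -
    define a where "a m = w m * G x - w m * f m x" for m
    have apos: "0 \<le> a m" for m
      unfolding a_def using B_leG[OF fB fx, of m] wpos[of m] by (simp add: right_diff_distrib[symmetric])
    have sa: "summable a" unfolding a_def by (intro summable_diff summable_mult2 sw swf)
    have suma: "suminf a = W * G x - W * xs x"
    proof -
      have "suminf a = suminf (\<lambda>m. w m * G x) - (\<Sum>m. w m * f m x)"
        unfolding a_def by (rule suminf_diff[symmetric]) (intro summable_mult2 sw swf)+
      also have "suminf (\<lambda>m. w m * G x) = W * G x" unfolding W_def by (rule suminf_mult2[OF sw, symmetric])
      also have "(\<Sum>m. w m * f m x) = W * xs x" unfolding xs_def using W by simp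
      finally show ?thesis .
    qed
    have "a n \<le> suminf a" using sum_le_suminf[OF sa, of "{n}"] apos by simp
    then have "w n * (G x - f n x) \<le> W * (G x - xs x)" using suma unfolding a_def
      by (simp add: right_diff_distrib)
    then have "w n / W * (G x - f n x) \<le> G x - xs x" using W
      by (simp add: field_simps)
    then show ?thesis unfolding lam_def by simp
  qed
  have xs_bl: "bounded_linear xs"
  proof (rule bounded_linear_intro[where K = "2 / W"])
    fix x y
    have "(\<Sum>n. w n * f n (x + y)) = (\<Sum>n. w n * f n x + w n * f n y)"
      using linear_add[OF bounded_linear.linear[OF bl]] by (simp add: distrib_left)
    also have "\<dots> = (\<Sum>n. w n * f n x) + (\<Sum>n. w n * f n y)" by (rule suminf_add[OF swf swf, symmetric])
    finally show "xs (x + y) = xs x + xs y" unfolding xs_def by (simp add: add_divide_distrib)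
  next
    fix r x
    have "(\<Sum>n. w n * f n (r *\<^sub>R x)) = (\<Sum>n. r * (w n * f n x))"
      using linear_scale[OF bounded_linear.linear[OF bl]] by (simp add: algebra_simps)
    also have "\<dots> = r * (\<Sum>n. w n * f n x)" by (rule suminf_mult[OF swf])
    finally show "xs (r *\<^sub>R x) = r *\<^sub>R xs x" unfolding xs_def by simp
  next
    fix x
    have snf: "summable (\<lambda>n. norm (w n * f n x))"
      by (rule summable_comparison_test'[OF summable_mult2[OF sg2], where N=0]) (use fb in auto)
    have "norm (\<Sum>n. w n * f n x) \<le> (\<Sum>n. norm (w n * f n x))"
      by (rule summable_norm[OF snf])
    also have "\<dots> \<le> (\<Sum>n. (1/2)^n * norm x)"
      by (rule suminf_le[OF _ snf summable_mult2[OF sg2]]) (use fb in auto)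
    also have "\<dots> = 2 * norm x" using suminf_mult2[OF sg2, of "norm x"] suminf_geometric[of "1/2::real"] by simp
    finally have "\<bar>\<Sum>n. w n * f n x\<bar> \<le> 2 * norm x" by simp
    then show "norm (xs x) \<le> norm x * (2 / W)" unfolding xs_def using W
      by (simp add: field_simps abs_divide)
  qed
  have xsB: "xs \<in> subdiff0 g"
  proof (rule B_intro[OF xs_bl])
    fix x assume "g x \<noteq> \<infinity>"
    then have "xs x \<le> G x - lam 0 * (G x - f 0 x)" "f 0 x \<le> G x" using K1 B_leG[OF fB] by blast+
    moreover have "0 \<le> lam 0 * (G x - f 0 x)" using lampos[of 0] calculation(2) by simp
    ultimately show "xs x \<le> G x" by linarith
  qed
  have yB: "(\<lambda>x. xs x + lam n * (xs x - f n x)) \<in> subdiff0 g" for n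
  proof (rule B_intro)
    show "bounded_linear (\<lambda>x. xs x + lam n * (xs x - f n x))"
      by (intro bounded_linear_add xs_bl bounded_linear_const_mult bounded_linear_sub bl)
  next
    fix x assume fx: "g x \<noteq> \<infinity>"
    have k: "xs x \<le> G x - lam n * (G x - f n x)" by (rule K1[OF fx])
    have fn: "f n x \<le> G x" by (rule B_leG[OF fB fx])
    have "xs x + lam n * (xs x - f n x) = (1 + lam n) * xs x - lam n * f n x" by (simp add: algebra_simps)
    also have "\<dots> \<le> (1 + lam n) * (G x - lam n * (G x - f n x)) - lam n * f n x"
      using k lampos[of n] by (simp add: mult_left_mono)
    also have "\<dots> = G x - lam n * lam n * (G x - f n x)" by (simp add: algebra_simps)
    also have "\<dots> \<le> G x" using fn lampos[of n] by simp
    finally show "xs x + lam n * (xs x - f n x) \<le> G x" .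
  qed
  show ?thesis using that[OF xsB lampos K1 yB] by blast
qed

end


context sg begin

lemma dense_seq:
  fixes D :: "'a set"
  assumes D: "countable D" "closure D = UNIV"
  obtains f :: "nat \<Rightarrow> 'a \<Rightarrow> real" where "\<And>n. f n \<in> subdiff0 g"
    "\<And>c J \<epsilon>. c \<in> subdiff0 g \<Longrightarrow> finite J \<Longrightarrow> \<epsilon> > 0 \<Longrightarrow> \<exists>n. \<forall>x\<in>J. \<bar>f n x - c x\<bar> < \<epsilon>"
proof -
  define B where "B = subdiff0 g"
  define P where "P = (\<lambda>(l::('a \<times> rat) list, e::rat, N::nat).
     {c\<in>B. onorm c \<le> real N \<and> (\<forall>(d,q)\<in>set l. \<bar>c d - of_rat q\<bar> < of_rat e)})"
  define I where "I = {i \<in> lists (D \<times> (UNIV::rat set)) \<times> (UNIV::(rat \<times> nat) set). P i \<noteq> {}}"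
  obtain c0 where c0: "c0 \<in> B" using B_ne unfolding B_def by blast
  define sel where "sel i = (SOME c. c \<in> P i)" for i
  define F where "F = insert c0 (sel ` I)"
  have selP: "sel i \<in> P i" if "i \<in> I" for i
  proof -
    have "\<exists>c. c \<in> P i" using that unfolding I_def by blast
    then show ?thesis unfolding sel_def by (rule someI_ex)
  qed
  have PB: "P i \<subseteq> B" for i unfolding P_def by (cases i) auto
  have FB: "F \<subseteq> B" unfolding F_def using c0 selP PB by blast
  have "countable (lists (D \<times> (UNIV::rat set)) \<times> (UNIV::(rat \<times> nat) set))"
    using D(1) by auto
  then have cI: "countable I" unfolding I_def by (rule countable_subset[rotated]) auto
  have cF: "countable F" unfolding F_def using cI by auto
  have Fne: "F \<noteq> {}" unfolding F_def by blast
  define f where "f = from_nat_into F"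
  have fF: "f n \<in> F" for n unfolding f_def by (rule from_nat_into[OF Fne])
  have Ff: "\<exists>n. f n = h" if "h \<in> F" for h
    using that range_from_nat_into[OF Fne cF] unfolding f_def by (metis rangeE)
  have fB: "f n \<in> subdiff0 g" for n using fF FB unfolding B_def by blast
  have dens: "\<exists>n. \<forall>x\<in>J. \<bar>f n x - c x\<bar> < \<epsilon>"
    if c: "c \<in> subdiff0 g" and J: "finite J" and eps: "\<epsilon> > 0" for c J \<epsilon>
  proof -
    define N where "N = nat \<lceil>onorm c\<rceil>"
    have cN: "onorm c \<le> real N" unfolding N_def by (rule real_nat_ceiling_ge)
    define \<delta> where "\<delta> = \<epsilon> / (4 * (real N + 1))"
    have dpos: "\<delta> > 0" using eps unfolding \<delta>_def by simp
    have Nd: "real N * \<delta> \<le> \<epsilon> / 4"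
    proof -
      have "real N * \<delta> = (\<epsilon> / 4) * (real N / (real N + 1))" unfolding \<delta>_def by simp
      also have "\<dots> \<le> (\<epsilon> / 4) * 1" using eps by (intro mult_left_mono) auto
      finally show ?thesis by simp
    qed
    have "\<forall>x\<in>J. \<exists>d. d \<in> D \<and> dist d x < \<delta>"
      using D(2) dpos closure_approachable[of _ D] by blast
    then obtain dd where dd: "\<forall>x\<in>J. dd x \<in> D \<and> dist (dd x) x < \<delta>" by (metis bchoice)
    obtain er where er: "er \<in> \<rat>" "0 < er" "er < \<epsilon> / 4" using Rats_dense_in_real[of 0 "\<epsilon>/4"] eps by auto
    then obtain e where e: "of_rat e = er" by (auto elim: Rats_cases)
    have "\<forall>x\<in>J. \<exists>q::rat. \<bar>c (dd x) - of_rat q\<bar> < of_rat e"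
    proof
      fix x
      obtain r where "r \<in> \<rat>" "c (dd x) < r" "r < c (dd x) + er"
        using Rats_dense_in_real[of "c (dd x)" "c (dd x) + er"] er by auto
      then obtain q where "r = of_rat q" by (auto elim!: Rats_cases)
      then have "\<bar>c (dd x) - of_rat q\<bar> < of_rat e" using e \<open>c (dd x) < r\<close> \<open>r < c (dd x) + er\<close> by auto
      then show "\<exists>q::rat. \<bar>c (dd x) - of_rat q\<bar> < of_rat e" by blast
    qed
    then obtain qq where qq: "\<forall>x\<in>J. \<bar>c (dd x) - of_rat (qq x)\<bar> < of_rat e" by (metis bchoice)
    obtain js where js: "set js = J" using finite_list[OF J] by blast
    define l where "l = map (\<lambda>x. (dd x, qq x)) js"
    define i where "i = (l, e, N)"
    have cP: "c \<in> P i" unfolding P_def i_def l_def using c cN qq js unfolding B_def by auto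
    have "i \<in> I" unfolding I_def i_def l_def using cP dd js by (auto simp: i_def l_def)
    then have hP: "sel i \<in> P i" and hF: "sel i \<in> F" using selP unfolding F_def by auto
    obtain n where n: "f n = sel i" using Ff[OF hF] by blast
    define h where "h = sel i"
    have hB: "h \<in> subdiff0 g" using hP PB unfolding h_def B_def by blast
    have hN: "onorm h \<le> real N" and hq: "\<forall>x\<in>J. \<bar>h (dd x) - of_rat (qq x)\<bar> < of_rat e"
      using hP js unfolding P_def i_def l_def h_def by auto
    have est: "\<bar>k x - k (dd x)\<bar> \<le> \<epsilon> / 4" if k: "k \<in> subdiff0 g" "onorm k \<le> real N" and x: "x \<in> J" for k x
    proof -
      have blk: "bounded_linear k" using B_bl[OF k(1)] .
      have "\<bar>k x - k (dd x)\<bar> = \<bar>k (x - dd x)\<bar>" using linear_diff[OF bounded_linear.linear[OF blk]] by simp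
      also have "\<dots> \<le> onorm k * norm (x - dd x)" using onorm[OF blk] by simp
      also have "\<dots> \<le> real N * \<delta>"
        using k(2) dd x onorm_pos_le[OF blk] by (intro mult_mono) (auto simp: dist_norm norm_minus_commute)
      finally show ?thesis using Nd by linarith
    qed
    have "\<bar>f n x - c x\<bar> < \<epsilon>" if x: "x \<in> J" for x
    proof -
      have "\<bar>h x - h (dd x)\<bar> \<le> \<epsilon> / 4" by (rule est[OF hB hN x])
      moreover have "\<bar>c x - c (dd x)\<bar> \<le> \<epsilon> / 4" by (rule est[OF c cN x])
      moreover have "\<bar>h (dd x) - of_rat (qq x)\<bar> < \<epsilon> / 4" using hq x e er by auto
      moreover have "\<bar>c (dd x) - of_rat (qq x)\<bar> < \<epsilon> / 4" using qq x e er by auto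
      ultimately show ?thesis unfolding n h_def[symmetric] by linarith
    qed
    then show ?thesis by blast
  qed
  show ?thesis using that[OF fB dens] by blast
qed

end


context sg begin

definition Mset where "Mset = {x. \<forall>c\<in>subdiff0 g. ereal (c x) = g x}"

lemma M_subspace: "subspace Mset"
proof -
  obtain c0 where c0: "c0 \<in> subdiff0 g" using B_ne by blast
  have lin: "linear c" if "c \<in> subdiff0 g" for c using bounded_linear.linear[OF B_bl[OF that]] .
  have finM: "g x \<noteq> \<infinity>" if "x \<in> Mset" for x using that c0 unfolding Mset_def by force
  have zero: "0 \<in> Mset" unfolding Mset_def using g0 lin by (simp add: linear_0)
  have neg: "-x \<in> Mset" if x: "x \<in> Mset" for x
  proof -
    have gx: "g x = ereal (G x)" using fin finM[OF x] by blast
    have cx: "c x = G x" if "c \<in> subdiff0 g" for c using x that gx unfolding Mset_def by force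
    have cnx: "c (-x) = - G x" if "c \<in> subdiff0 g" for c using cx[OF that] linear_neg[OF lin[OF that]] by simp
    have "g (-x) = ereal (- G x)"
    proof (rule antisym)
      show "ereal (- G x) \<le> g (-x)" using B_le[OF c0, of "-x"] cnx[OF c0] by simp
      show "g (-x) \<le> ereal (- G x)"
      proof (rule ccontr)
        assume "\<not> g (-x) \<le> ereal (- G x)"
        then obtain c where "c \<in> subdiff0 g" "- G x < c (-x)" using HB_g[of "- G x" "-x"] by (auto simp: not_le)
        then show False using cnx by force
      qed
    qed
    then show ?thesis unfolding Mset_def using cnx by simp
  qed
  have add: "x + y \<in> Mset" if x: "x \<in> Mset" and y: "y \<in> Mset" for x y
    unfolding Mset_def
  proof (intro CollectI ballI)
    fix c assume c: "c \<in> subdiff0 g"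
    have "g (x + y) \<le> g x + g y" by (rule g_add)
    also have "\<dots> = ereal (c x + c y)"
    proof -
      have "g x = ereal (c x)" "g y = ereal (c y)" using x y c unfolding Mset_def by auto
      then show ?thesis by simp
    qed
    also have "\<dots> = ereal (c (x + y))" using linear_add[OF lin[OF c]] by simp
    finally show "ereal (c (x + y)) = g (x + y)" using B_le[OF c, of "x + y"] by simp
  qed
  have pos: "t *\<^sub>R x \<in> Mset" if x: "x \<in> Mset" and t: "t > 0" for x t
    unfolding Mset_def
  proof (intro CollectI ballI)
    fix c assume c: "c \<in> subdiff0 g"
    have "g (t *\<^sub>R x) = ereal t * ereal (c x)" using g_hom[OF t] x c unfolding Mset_def by force
    also have "\<dots> = ereal (c (t *\<^sub>R x))" using linear_scale[OF lin[OF c]] by simp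
    finally show "ereal (c (t *\<^sub>R x)) = g (t *\<^sub>R x)" by simp
  qed
  have scal: "t *\<^sub>R x \<in> Mset" if x: "x \<in> Mset" for x t
  proof -
    consider "t > 0" | "t = 0" | "t < 0" by linarith
    then show ?thesis
    proof cases
      case 1 then show ?thesis using pos x by blast
    next
      case 2 then show ?thesis using zero by simp
    next
      case 3
      then have "(-t) *\<^sub>R (-x) \<in> Mset" using pos[OF neg[OF x], of "-t"] by simp
      then show ?thesis by simp
    qed
  qed
  show ?thesis by (rule subspaceI) (use zero add scal in auto)
qed

lemma below_eq:
  fixes f :: "nat \<Rightarrow> 'a \<Rightarrow> real"
  assumes xsB: "xs \<in> subdiff0 g" and lampos: "\<And>n. lam n > 0"
    and K1: "\<And>x n. g x \<noteq> \<infinity> \<Longrightarrow> xs x \<le> G x - lam n * (G x - f n x)"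
    and fB: "\<And>n. f n \<in> subdiff0 g"
    and dens: "\<And>c J \<epsilon>. c \<in> subdiff0 g \<Longrightarrow> finite J \<Longrightarrow> \<epsilon> > 0 \<Longrightarrow> \<exists>n. \<forall>x\<in>J. \<bar>f n x - c x\<bar> < \<epsilon>"
  shows "below_set g xs = Mset"
proof
  show "Mset \<subseteq> below_set g xs" using xsB unfolding Mset_def below_set_def by force
next
  show "below_set g xs \<subseteq> Mset"
  proof
    fix x assume "x \<in> below_set g xs"
    then have le: "g x \<le> ereal (xs x)" by (simp add: below_set_def)
    then have fx: "g x \<noteq> \<infinity>" by auto
    have Gx: "G x \<le> xs x" using le fin[OF fx] by simp
    have fn: "f n x = G x" for n
    proof -
      have "xs x \<le> G x - lam n * (G x - f n x)" by (rule K1[OF fx])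
      moreover have "f n x \<le> G x" by (rule B_leG[OF fB fx])
      ultimately have "lam n * (G x - f n x) \<le> 0" using Gx by linarith
      then have "G x - f n x \<le> 0" using lampos[of n] by (simp add: mult_le_0_iff)
      then show ?thesis using \<open>f n x \<le> G x\<close> by linarith
    qed
    have "c x = G x" if c: "c \<in> subdiff0 g" for c
    proof (rule ccontr)
      assume ne: "c x \<noteq> G x"
      have "c x \<le> G x" by (rule B_leG[OF c fx])
      with ne have "0 < G x - c x" by linarith
      from dens[OF c _ this, of "{x}"] obtain n where "\<bar>f n x - c x\<bar> < G x - c x" by auto
      then show False using fn[of n] by linarith
    qed
    then show "x \<in> Mset" unfolding Mset_def using fin[OF fx] by simp
  qed
qed

end


lemma ws_closure:
  fixes S :: "('a::real_normed_vector \<Rightarrow> real) set"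
  assumes S: "S \<subseteq> dual_space"
  shows "y \<in> weak_star closure_of S \<longleftrightarrow>
    y \<in> dual_space \<and> (\<forall>J. finite J \<longrightarrow> (\<forall>\<epsilon>>0. \<exists>s\<in>S. \<forall>x\<in>J. \<bar>s x - y x\<bar> < \<epsilon>))"
proof -
  define PT where "PT = product_topology (\<lambda>_::'a. euclideanreal) UNIV"
  have eq: "weak_star closure_of S = dual_space \<inter> (PT closure_of S)"
    unfolding weak_star_def closure_of_subtopology PT_def using S by (simp add: Int_absorb1)
  have top: "topspace PT = UNIV" unfolding PT_def by simp
  show ?thesis
  proof
    assume "y \<in> weak_star closure_of S"
    then have yD: "y \<in> dual_space" and yc: "y \<in> PT closure_of S" using eq by auto
    have "\<exists>s\<in>S. \<forall>x\<in>J. \<bar>s x - y x\<bar> < \<epsilon>" if J: "finite J" and e: "\<epsilon> > 0" for J \<epsilon>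
    proof -
      define T where "T = {h. \<forall>x\<in>J. \<bar>h x - y x\<bar> < \<epsilon>}"
      have yT: "y \<in> T" unfolding T_def using e by simp
      have "openin PT T"
        unfolding PT_def openin_product_topology_alt
      proof (intro ballI)
        fix h assume hT: "h \<in> T"
        define U where "U i = (if i \<in> J then ball (y i) \<epsilon> else UNIV)" for i
        have "finite {i \<in> UNIV. U i \<noteq> topspace euclideanreal}"
          by (rule finite_subset[OF _ J]) (auto simp: U_def)
        moreover have "\<forall>i\<in>UNIV. openin euclideanreal (U i)" by (simp add: U_def)
        moreover have "h \<in> Pi\<^sub>E UNIV U"
        proof -
          have "h i \<in> U i" for i
          proof (cases "i \<in> J")
            case True
            then have "\<bar>h i - y i\<bar> < \<epsilon>" using hT unfolding T_def by blast
            then show ?thesis using True by (simp add: U_def dist_real_def abs_minus_commute)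
          qed (simp add: U_def)
          then show ?thesis by (simp add: PiE_UNIV_domain)
        qed
        moreover have "Pi\<^sub>E UNIV U \<subseteq> T"
        proof
          fix h' assume "h' \<in> Pi\<^sub>E UNIV U"
          then have hU: "h' i \<in> U i" for i by (simp add: PiE_UNIV_domain Pi_iff)
          have "\<bar>h' x - y x\<bar> < \<epsilon>" if "x \<in> J" for x
          proof -
            have "dist (y x) (h' x) < \<epsilon>" using hU[of x] that by (simp add: U_def)
            then show ?thesis by (simp add: dist_real_def abs_minus_commute)
          qed
          then show "h' \<in> T" unfolding T_def by blast
        qed
        ultimately show "\<exists>U. finite {i \<in> UNIV. U i \<noteq> topspace euclideanreal} \<and>
            (\<forall>i\<in>UNIV. openin euclideanreal (U i)) \<and> h \<in> Pi\<^sub>E UNIV U \<and> Pi\<^sub>E UNIV U \<subseteq> T" by blast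
      qed
      then obtain s where "s \<in> S" "s \<in> T" using yc yT unfolding in_closure_of by blast
      then show ?thesis unfolding T_def by blast
    qed
    then show "y \<in> dual_space \<and> (\<forall>J. finite J \<longrightarrow> (\<forall>\<epsilon>>0. \<exists>s\<in>S. \<forall>x\<in>J. \<bar>s x - y x\<bar> < \<epsilon>))"
      using yD by blast
  next
    assume R: "y \<in> dual_space \<and> (\<forall>J. finite J \<longrightarrow> (\<forall>\<epsilon>>0. \<exists>s\<in>S. \<forall>x\<in>J. \<bar>s x - y x\<bar> < \<epsilon>))"
    have "y \<in> PT closure_of S"
      unfolding in_closure_of
    proof (intro conjI allI impI)
      show "y \<in> topspace PT" using top by simp
    next
      fix T assume "y \<in> T \<and> openin PT T"
      then obtain U where fU: "finite {i \<in> UNIV. U i \<noteq> topspace euclideanreal}"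
        and oU: "\<forall>i\<in>UNIV. openin euclideanreal (U i)" and yU: "y \<in> Pi\<^sub>E UNIV U"
        and UT: "Pi\<^sub>E UNIV U \<subseteq> T"
        unfolding PT_def openin_product_topology_alt by blast
      define J where "J = {i. U i \<noteq> UNIV}"
      have J: "finite J" using fU unfolding J_def by simp
      have "\<forall>i\<in>J. \<exists>e. e > 0 \<and> (\<forall>r. dist r (y i) < e \<longrightarrow> r \<in> U i)"
      proof
        fix i assume "i \<in> J"
        have "open (U i)" using oU by simp
        moreover have "y i \<in> U i" using yU by (simp add: PiE_UNIV_domain Pi_iff)
        ultimately show "\<exists>e. e > 0 \<and> (\<forall>r. dist r (y i) < e \<longrightarrow> r \<in> U i)"
          using open_dist by blast
      qed
      then obtain ee where ee: "\<forall>i\<in>J. ee i > 0 \<and> (\<forall>r. dist r (y i) < ee i \<longrightarrow> r \<in> U i)"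
        by (metis bchoice)
      define \<epsilon> where "\<epsilon> = Min (insert 1 (ee ` J))"
      have epos: "\<epsilon> > 0" unfolding \<epsilon>_def using J ee by (subst Min_gr_iff) auto
      have ele: "\<epsilon> \<le> ee i" if "i \<in> J" for i unfolding \<epsilon>_def using J that by (intro Min_le) auto
      obtain s where s: "s \<in> S" "\<forall>x\<in>J. \<bar>s x - y x\<bar> < \<epsilon>" using R J epos by blast
      have "s i \<in> U i" for i
      proof (cases "i \<in> J")
        case True
        have "\<bar>s i - y i\<bar> < \<epsilon>" using s(2) True by blast
        then have "dist (s i) (y i) < ee i" using ele[OF True] by (simp add: dist_real_def)
        then show ?thesis using ee True by blast
      next
        case False then show ?thesis unfolding J_def by simp
      qed
      then have "s \<in> T" using UT by (auto simp: PiE_UNIV_domain)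
      then show "\<exists>s. s \<in> S \<and> s \<in> T" using s(1) by blast
    qed
    then show "y \<in> weak_star closure_of S" using eq R by blast
  qed
qed



context sg begin

lemma B_conv:
  assumes c1: "c1 \<in> subdiff0 g" and c2: "c2 \<in> subdiff0 g" and a: "0 \<le> a" "a \<le> 1"
  shows "(\<lambda>x. a * c1 x + (1 - a) * c2 x) \<in> subdiff0 g"
proof (rule B_intro)
  show "bounded_linear (\<lambda>x. a * c1 x + (1 - a) * c2 x)"
    by (intro bounded_linear_add bounded_linear_const_mult B_bl c1 c2)
next
  fix x assume fx: "g x \<noteq> \<infinity>"
  have "a * c1 x \<le> a * G x" using B_leG[OF c1 fx] a by (simp add: mult_left_mono)
  moreover have "(1 - a) * c2 x \<le> (1 - a) * G x" using B_leG[OF c2 fx] a by (simp add: mult_left_mono)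
  ultimately show "a * c1 x + (1 - a) * c2 x \<le> G x" by (simp add: algebra_simps)
qed

lemma qri_part:
  fixes f :: "nat \<Rightarrow> 'a \<Rightarrow> real"
  assumes xsB: "xs \<in> subdiff0 g" and lampos: "\<And>n. lam n > 0"
    and yB: "\<And>n. (\<lambda>x. xs x + lam n * (xs x - f n x)) \<in> subdiff0 g"
    and dens: "\<And>c J \<epsilon>. c \<in> subdiff0 g \<Longrightarrow> finite J \<Longrightarrow> \<epsilon> > 0 \<Longrightarrow> \<exists>n. \<forall>x\<in>J. \<bar>f n x - c x\<bar> < \<epsilon>"
  shows "fun_subspace (weak_star closure_of
           {(\<lambda>x. t * (c x - xs x)) | t c. t \<ge> 0 \<and> c \<in> subdiff0 g})"
proof -
  define K where "K = {(\<lambda>x. t * (c x - xs x)) | t c. t \<ge> 0 \<and> c \<in> subdiff0 g}"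
  have KD: "K \<subseteq> dual_space"
  proof
    fix k assume "k \<in> K"
    then obtain t c where c: "c \<in> subdiff0 g" and kk: "k = (\<lambda>x. t * (c x - xs x))" unfolding K_def by blast
    show "k \<in> dual_space" unfolding kk dual_space_def
      using bounded_linear_const_mult[OF bounded_linear_sub[OF B_bl[OF c] B_bl[OF xsB]]] by simp
  qed
  note CL = ws_closure[OF KD]
  have K0: "(\<lambda>x. 0) \<in> K"
    unfolding K_def by (rule CollectI, rule exI[of _ 0], rule exI[of _ xs]) (simp add: xsB)
  have Kscale: "(\<lambda>x. a * k x) \<in> K" if k: "k \<in> K" and a: "a \<ge> 0" for k a
  proof -
    obtain t c where t: "t \<ge> 0" "c \<in> subdiff0 g" and kk: "k = (\<lambda>x. t * (c x - xs x))" using k unfolding K_def by blast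
    have "(\<lambda>x. a * k x) = (\<lambda>x. (a * t) * (c x - xs x))" unfolding kk by (simp add: mult.assoc)
    moreover have "a * t \<ge> 0" using a t by simp
    ultimately show ?thesis unfolding K_def using t by blast
  qed
  have Kadd: "(\<lambda>x. k1 x + k2 x) \<in> K" if k1: "k1 \<in> K" and k2: "k2 \<in> K" for k1 k2
  proof -
    obtain t1 c1 where t1: "t1 \<ge> 0" "c1 \<in> subdiff0 g" and kk1: "k1 = (\<lambda>x. t1 * (c1 x - xs x))"
      using k1 unfolding K_def by blast
    obtain t2 c2 where t2: "t2 \<ge> 0" "c2 \<in> subdiff0 g" and kk2: "k2 = (\<lambda>x. t2 * (c2 x - xs x))"
      using k2 unfolding K_def by blast
    show ?thesis
    proof (cases "t1 + t2 = 0")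
      case True
      then have "t1 = 0" "t2 = 0" using t1 t2 by auto
      then have "(\<lambda>x. k1 x + k2 x) = (\<lambda>x. 0)" unfolding kk1 kk2 by simp
      then show ?thesis using K0 by simp
    next
      case False
      then have s: "t1 + t2 > 0" using t1 t2 by simp
      define a where "a = t1 / (t1 + t2)"
      have a: "0 \<le> a" "a \<le> 1" using t1 t2 s unfolding a_def by (auto simp: field_simps)
      have ma: "1 - a = t2 / (t1 + t2)" unfolding a_def using s by (simp add: field_simps)
      define c where "c = (\<lambda>x. a * c1 x + (1 - a) * c2 x)"
      have cB: "c \<in> subdiff0 g" unfolding c_def by (rule B_conv[OF t1(2) t2(2) a])
      have eqk: "(\<lambda>x. k1 x + k2 x) = (\<lambda>x. (t1 + t2) * (c x - xs x))"
      proof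
        fix x
        have "(t1 + t2) * (c x - xs x) = (t1 + t2) * a * c1 x + (t1 + t2) * (1 - a) * c2 x - (t1 + t2) * xs x"
          unfolding c_def by (simp add: algebra_simps)
        also have "(t1 + t2) * a = t1" unfolding a_def using s by simp
        also have "(t1 + t2) * (1 - a) = t2" unfolding ma using s by simp
        finally show "k1 x + k2 x = (t1 + t2) * (c x - xs x)" unfolding kk1 kk2 by (simp add: algebra_simps)
      qed
      have "(\<lambda>x. k1 x + k2 x) = (\<lambda>x. (t1 + t2) * (c x - xs x)) \<and> t1 + t2 \<ge> 0 \<and> c \<in> subdiff0 g"
        using eqk s cB by simp
      then show ?thesis unfolding K_def by blast
    qed
  qed
  have Kneg: "\<exists>k\<in>K. \<forall>x\<in>J. \<bar>k x - (xs x - c x)\<bar> < \<epsilon>"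
    if c: "c \<in> subdiff0 g" and J: "finite J" and e: "\<epsilon> > 0" for c J \<epsilon>
  proof -
    obtain n where n: "\<forall>x\<in>J. \<bar>f n x - c x\<bar> < \<epsilon>" using dens[OF c J e] by blast
    define k where "k = (\<lambda>x. (1 / lam n) * ((xs x + lam n * (xs x - f n x)) - xs x))"
    have kK: "k \<in> K" unfolding k_def K_def using yB[of n] lampos[of n]
      by (intro CollectI exI[of _ "1 / lam n"] exI[of _ "\<lambda>x. xs x + lam n * (xs x - f n x)"]) simp
    have "k x = xs x - f n x" for x unfolding k_def using lampos[of n] by simp
    then have "\<forall>x\<in>J. \<bar>k x - (xs x - c x)\<bar> < \<epsilon>" using n by (simp add: abs_minus_commute)
    then show ?thesis using kK by blast
  qed
  let ?C = "weak_star closure_of K"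
  have inC: "y \<in> ?C" if "y \<in> dual_space" "\<And>J \<epsilon>. finite J \<Longrightarrow> \<epsilon> > 0 \<Longrightarrow> \<exists>s\<in>K. \<forall>x\<in>J. \<bar>s x - y x\<bar> < \<epsilon>" for y
    unfolding CL using that by blast
  have fromC1: "y \<in> dual_space" if "y \<in> ?C" for y
    using that unfolding CL by blast
  have fromC2: "\<exists>s\<in>K. \<forall>x\<in>J. \<bar>s x - y x\<bar> < \<epsilon>" if "y \<in> ?C" "finite J" "\<epsilon> > 0" for y J \<epsilon>
  proof -
    have "\<forall>J. finite J \<longrightarrow> (\<forall>\<epsilon>>0. \<exists>s\<in>K. \<forall>x\<in>J. \<bar>s x - y x\<bar> < \<epsilon>)"
      using that(1) unfolding CL by (rule conjunct2)
    then show ?thesis using that(2,3) by blast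
  qed
  have zero: "(\<lambda>_. 0) \<in> ?C"
  proof (rule inC)
    show "(\<lambda>_. 0) \<in> dual_space" by (simp add: dual_space_def)
    show "\<exists>s\<in>K. \<forall>x\<in>J. \<bar>s x - 0\<bar> < \<epsilon>" if "\<epsilon> > 0" for J and \<epsilon> :: real
      using K0 that by (intro bexI[of _ "\<lambda>x. 0"]) auto
  qed
  have add: "(\<lambda>x. y1 x + y2 x) \<in> ?C" if y1: "y1 \<in> ?C" and y2: "y2 \<in> ?C" for y1 y2
  proof (rule inC)
    show "(\<lambda>x. y1 x + y2 x) \<in> dual_space"
      using fromC1[OF y1] fromC1[OF y2] by (auto simp: dual_space_def intro: bounded_linear_add)
  next
    fix J :: "'a set" and \<epsilon> :: real assume J: "finite J" and e: "\<epsilon> > 0"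
    obtain s1 where s1: "s1 \<in> K" "\<forall>x\<in>J. \<bar>s1 x - y1 x\<bar> < \<epsilon> / 2" using fromC2[OF y1 J, of "\<epsilon>/2"] e by auto
    obtain s2 where s2: "s2 \<in> K" "\<forall>x\<in>J. \<bar>s2 x - y2 x\<bar> < \<epsilon> / 2" using fromC2[OF y2 J, of "\<epsilon>/2"] e by auto
    have "\<forall>x\<in>J. \<bar>(s1 x + s2 x) - (y1 x + y2 x)\<bar> < \<epsilon>"
    proof
      fix x assume "x \<in> J"
      then have "\<bar>s1 x - y1 x\<bar> < \<epsilon> / 2" "\<bar>s2 x - y2 x\<bar> < \<epsilon> / 2" using s1 s2 by auto
      then show "\<bar>(s1 x + s2 x) - (y1 x + y2 x)\<bar> < \<epsilon>" by linarith
    qed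
    then show "\<exists>s\<in>K. \<forall>x\<in>J. \<bar>s x - (y1 x + y2 x)\<bar> < \<epsilon>" using Kadd[OF s1(1) s2(1)] by (intro bexI) auto
  qed
  have scal: "(\<lambda>x. t * y x) \<in> ?C" if y: "y \<in> ?C" for y t
  proof (rule inC)
    show "(\<lambda>x. t * y x) \<in> dual_space"
      using fromC1[OF y] by (auto simp: dual_space_def intro: bounded_linear_const_mult)
  next
    fix J :: "'a set" and \<epsilon> :: real assume J: "finite J" and e: "\<epsilon> > 0"
    show "\<exists>s\<in>K. \<forall>x\<in>J. \<bar>s x - t * y x\<bar> < \<epsilon>"
    proof (cases "t \<ge> 0")
      case True
      have e1: "\<epsilon> / (t + 1) > 0" using e True by simp
      obtain s where s: "s \<in> K" "\<forall>x\<in>J. \<bar>s x - y x\<bar> < \<epsilon> / (t + 1)" using fromC2[OF y J e1] by auto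
      have "\<forall>x\<in>J. \<bar>t * s x - t * y x\<bar> < \<epsilon>"
      proof
        fix x assume "x \<in> J"
        then have "\<bar>s x - y x\<bar> < \<epsilon> / (t + 1)" using s by auto
        then have "t * \<bar>s x - y x\<bar> \<le> t * (\<epsilon> / (t + 1))" using True by (intro mult_left_mono) auto
        also have "\<dots> < \<epsilon>" using True e by (simp add: field_simps)
        finally show "\<bar>t * s x - t * y x\<bar> < \<epsilon>" using True
          by (simp add: right_diff_distrib[symmetric] abs_mult)
      qed
      then show ?thesis using Kscale[OF s(1) True] by (intro bexI) auto
    next
      case False
      define r where "r = - t"
      have r: "r > 0" using False unfolding r_def by simp
      have e1: "\<epsilon> / (2 * r) > 0" using e r by simp
      obtain s where s: "s \<in> K" "\<forall>x\<in>J. \<bar>s x - y x\<bar> < \<epsilon> / (2 * r)" using fromC2[OF y J e1] by auto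
      obtain \<tau> c where tc: "\<tau> \<ge> 0" "c \<in> subdiff0 g" and ss: "s = (\<lambda>x. \<tau> * (c x - xs x))"
        using s(1) unfolding K_def by blast
      have e2: "\<epsilon> / (2 * (r * \<tau> + 1)) > 0" using e r tc by (simp add: add_nonneg_pos)
      obtain k where k: "k \<in> K" "\<forall>x\<in>J. \<bar>k x - (xs x - c x)\<bar> < \<epsilon> / (2 * (r * \<tau> + 1))"
        using Kneg[OF tc(2) J e2] by blast
      have rt: "r * \<tau> \<ge> 0" using r tc by simp
      have "\<forall>x\<in>J. \<bar>(r * \<tau>) * k x - t * y x\<bar> < \<epsilon>"
      proof
        fix x assume x: "x \<in> J"
        have a1: "\<bar>k x - (xs x - c x)\<bar> < \<epsilon> / (2 * (r * \<tau> + 1))" using k x by auto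
        have a2: "\<bar>s x - y x\<bar> < \<epsilon> / (2 * r)" using s x by auto
        have "(r * \<tau>) * k x - (r * \<tau>) * (xs x - c x) = (r * \<tau>) * (k x - (xs x - c x))"
          by (simp add: right_diff_distrib)
        then have "\<bar>(r * \<tau>) * k x - (r * \<tau>) * (xs x - c x)\<bar> = (r * \<tau>) * \<bar>k x - (xs x - c x)\<bar>"
          using abs_mult[of "r * \<tau>" "k x - (xs x - c x)"] abs_of_nonneg[OF rt] by simp
        also have "\<dots> \<le> (r * \<tau>) * (\<epsilon> / (2 * (r * \<tau> + 1)))" using rt a1 by (intro mult_left_mono) auto
        also have "\<dots> \<le> \<epsilon> / 2" using rt e by (simp add: field_simps)
        finally have b1: "\<bar>(r * \<tau>) * k x - (r * \<tau>) * (xs x - c x)\<bar> \<le> \<epsilon> / 2" .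
        have "(r * \<tau>) * (xs x - c x) = - r * s x" unfolding ss by (simp add: algebra_simps)
        then have "(r * \<tau>) * (xs x - c x) - t * y x = - r * (s x - y x)"
          unfolding r_def by (simp add: algebra_simps)
        then have "\<bar>(r * \<tau>) * (xs x - c x) - t * y x\<bar> = r * \<bar>s x - y x\<bar>"
          using r by (simp add: abs_mult)
        also have "\<dots> < r * (\<epsilon> / (2 * r))" by (rule mult_strict_left_mono[OF a2 r])
        also have "\<dots> = \<epsilon> / 2" using r by simp
        finally have b2: "\<bar>(r * \<tau>) * (xs x - c x) - t * y x\<bar> < \<epsilon> / 2" .
        show "\<bar>(r * \<tau>) * k x - t * y x\<bar> < \<epsilon>" using b1 b2 by linarith
      qed
      then show ?thesis using Kscale[OF k(1) rt] by (intro bexI) auto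
    qed
  qed
  have "fun_subspace ?C" unfolding fun_subspace_def using zero add scal by blast
  then show ?thesis unfolding K_def .
qed

end

theorem proposition7:
  fixes g :: "'a::real_normed_vector \<Rightarrow> ereal"
  assumes "separable_normed TYPE('a)"
    and "proper_fun g" and "lsc_fun g" and "convex_efun g"
    and "sublinear_efun g"
  shows "wstar_qri (subdiff0 g) \<noteq> {}
    \<and> (\<exists>xs \<in> dual_space. subspace (below_set g xs))"
proof -
  interpret sg g using assms(2,3,5) by unfold_locales
  obtain D :: "'a set" where D: "countable D" "closure D = UNIV"
    using assms(1) unfolding separable_normed_def by blast
  have "\<exists>f :: nat \<Rightarrow> 'a \<Rightarrow> real. (\<forall>n. f n \<in> subdiff0 g) \<and>
    (\<forall>c J \<epsilon>. c \<in> subdiff0 g \<longrightarrow> finite J \<longrightarrow> \<epsilon> > 0 \<longrightarrow> (\<exists>n. \<forall>x\<in>J. \<bar>f n x - c x\<bar> < \<epsilon>))"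
    by (rule dense_seq[OF D]) blast
  then obtain f :: "nat \<Rightarrow> 'a \<Rightarrow> real" where fB: "\<And>n. f n \<in> subdiff0 g"
    and dens: "\<And>c J \<epsilon>. c \<in> subdiff0 g \<Longrightarrow> finite J \<Longrightarrow> \<epsilon> > 0 \<Longrightarrow> \<exists>n. \<forall>x\<in>J. \<bar>f n x - c x\<bar> < \<epsilon>"
    by blast
  obtain xs lam where xsB: "xs \<in> subdiff0 g" and lampos: "\<And>n. lam n > 0"
    and K1: "\<And>x n. g x \<noteq> \<infinity> \<Longrightarrow> xs x \<le> G x - lam n * (G x - f n x)"
    and yB: "\<And>n. (\<lambda>x. xs x + lam n * (xs x - f n x)) \<in> subdiff0 g"
    by (rule series[where f=f, OF fB]) blast
  have "xs \<in> wstar_qri (subdiff0 g)"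
    unfolding wstar_qri_def using xsB qri_part[OF xsB lampos yB dens] by blast
  moreover have "subspace (below_set g xs)"
    using below_eq[OF xsB lampos K1 fB dens] M_subspace by simp
  moreover have "xs \<in> dual_space" using xsB by (simp add: subdiff0_def)
  ultimately show ?thesis by blast
qed


end
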